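(* Let $H$ be a real vector space of dimension $d+1$ with $d\ge1$, and $q$ a quadratic form on $H$ of signature $(1,d)$. Let $A\subset H$ be a discrete subset such that for some constant $M>0$ we have $q(x)\ge -M$ for all $x\in A$, and suppose there is a proper subspace $H_0\subsetneq H$ with $A\subset H_0$. Let $u\in H\setminus H_0$ with $q(u)=0$. Then there is an open neighbourhood $U$ of $u$ in $H$ such that $U\cap x^\perp\ne\emptyset$ for only finitely many $x\in A$.
   Context: $x^\perp$ denotes the $q$-orthogonal complement of $x$ in $H$. *)

theory Defs
  imports "HOL-Analysis.Analysis"
begin

definition quadratic_form :: "('a::real_vector \<Rightarrow> real) \<Rightarrow> bool" where
  "quadratic_form q \<longleftrightarrow>
     (\<exists>B. bilinear B \<and> (\<forall>x y. B x y = B y x) \<and> (\<forall>x. q x = B x x))"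

definition polar_form :: "('a::real_vector \<Rightarrow> real) \<Rightarrow> 'a \<Rightarrow> 'a \<Rightarrow> real" where
  "polar_form q x y = (q (x + y) - q x - q y) / 2"

definition q_orth :: "('a::real_vector \<Rightarrow> real) \<Rightarrow> 'a \<Rightarrow> 'a set" where
  "q_orth q x = {y. polar_form q x y = 0}"

definition has_signature :: "('a::euclidean_space \<Rightarrow> real) \<Rightarrow> nat \<Rightarrow> nat \<Rightarrow> bool" where
  "has_signature q p n \<longleftrightarrow> quadratic_form q \<and>
     (\<exists>V. subspace V \<and> dim V = p \<and> (\<forall>v\<in>V. v \<noteq> 0 \<longrightarrow> q v > 0)) \<and>
     (\<forall>V. subspace V \<and> (\<forall>v\<in>V. v \<noteq> 0 \<longrightarrow> q v > 0) \<longrightarrow> dim V \<le> p) \<and>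
     (\<exists>V. subspace V \<and> dim V = n \<and> (\<forall>v\<in>V. v \<noteq> 0 \<longrightarrow> q v < 0)) \<and>
     (\<forall>V. subspace V \<and> (\<forall>v\<in>V. v \<noteq> 0 \<longrightarrow> q v < 0) \<longrightarrow> dim V \<le> n)"

text \<open>Discrete subset of H: no accumulation points in H (closed and discrete).\<close>
definition discrete_subset :: "'a::topological_space set \<Rightarrow> bool" where
  "discrete_subset A \<longleftrightarrow> (\<forall>x. \<not> x islimpt A)"

end

theory Submission
  imports Defs
begin

lemma key:
  fixes B :: "'a::euclidean_space \<Rightarrow> 'a \<Rightarrow> real"
  assumes bl: "bilinear B" and sym: "\<forall>x y. B x y = B y x"
    and N: "subspace N" "dim N = d" "\<forall>v\<in>N. v \<noteq> 0 \<longrightarrow> B v v < 0"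
    and D: "DIM('a) = d + 1"
    and u: "B u u = 0" and w: "B w w \<ge> 0" "B w u = 0"
    and ind: "independent {w, u}" "w \<noteq> u"
  shows False
proof -
  let ?V = "span {w, u}"
  have dV: "dim ?V = 2" using ind
  proof -
    have "dim ?V = card {w, u}" using ind(1) by (simp add: dim_span dim_eq_card_independent)
    then show ?thesis using ind(2) by simp
  qed
  have sub: "subspace ?V" by simp
  have "dim {x + y |x y. x \<in> ?V \<and> y \<in> N} \<le> d + 1"
    using dim_subset_UNIV[of "{x + y |x y. x \<in> ?V \<and> y \<in> N}"] D by simp
  then have "dim (?V \<inter> N) \<ge> 1" using dim_sums_Int[OF sub N(1)] dV N(2) by linarith
  then obtain v where v: "v \<in> ?V" "v \<in> N" "v \<noteq> 0"
  proof -
    have "\<not> (?V \<inter> N \<subseteq> {0})" using \<open>dim (?V \<inter> N) \<ge> 1\<close> dim_eq_0[of "?V \<inter> N"] by linarith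
    then show ?thesis using that by blast
  qed
  obtain k where "v - k *\<^sub>R w \<in> span {u}" using v(1) span_insert[of w "{u}"] by auto
  then obtain c where "v - k *\<^sub>R w = c *\<^sub>R u" by (auto simp: span_singleton)
  then have vc: "v = k *\<^sub>R w + c *\<^sub>R u" by (metis add.commute diff_add_cancel)
  have "B v v = k * k * B w w"
    unfolding vc using bl u w sym
    by (simp add: bilinear_ladd bilinear_radd bilinear_lmul bilinear_rmul)
  also have "\<dots> \<ge> 0" using w by simp
  finally show False using N(3) v by fastforce
qed

theorem corollary5p15:
  fixes q :: "'a::euclidean_space \<Rightarrow> real"
    and A H0 :: "'a set" and u :: 'a and d :: nat and M :: real
  assumes "DIM('a) = d + 1" and "d \<ge> 1"
    and "has_signature q 1 d"
    and "discrete_subset A"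
    and "M > 0" and "\<forall>x\<in>A. q x \<ge> - M"
    and "subspace H0" and "H0 \<noteq> UNIV" and "A \<subseteq> H0"
    and "u \<notin> H0" and "q u = 0"
  shows "\<exists>U. open U \<and> u \<in> U \<and> finite {x \<in> A. U \<inter> q_orth q x \<noteq> {}}"
proof -
  note D = assms(1) and H0 = assms(7) and Msub = assms(9) and uH = assms(10)
  obtain B where bl: "bilinear B" and sym: "\<forall>x y. B x y = B y x" and qB: "\<And>x. q x = B x x"
    using assms(3) unfolding has_signature_def quadratic_form_def by blast
  obtain N where N: "subspace N" "dim N = d" "\<forall>v\<in>N. v \<noteq> 0 \<longrightarrow> B v v < 0"
    using assms(3) unfolding has_signature_def qB by blast
  have pol: "polar_form q x y = B x y" for x y
    unfolding polar_form_def qB using bl sym by (simp add: bilinear_ladd bilinear_radd)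
  have u0: "u \<noteq> 0" using uH H0 subspace_0 by blast
  have Bu: "B u u = 0" using assms(11) qB by simp
  have nz: "B w u \<noteq> 0" if "w \<in> H0" "w \<noteq> 0" "B w w \<ge> 0" for w
  proof
    assume wu: "B w u = 0"
    have "w \<noteq> u" using that uH by auto
    moreover have "independent {w, u}"
    proof -
      have "w \<notin> span {u}"
      proof
        assume "w \<in> span {u}"
        then obtain k where k: "w = k *\<^sub>R u" by (auto simp: span_singleton)
        then have "k \<noteq> 0" using that by auto
        then have "u = (1/k) *\<^sub>R w" using k by simp
        then show False using that(1) H0 uH by (metis subspace_scale)
      qed
      then show ?thesis using u0 by (simp add: independent_insert)
    qed
    ultimately show False using key[OF bl sym N D Bu that(3) wu] by blast
  qed
  define S where "S = sphere (0::'a) 1 \<inter> H0"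
  define \<phi> where "\<phi> w = \<bar>B w u\<bar> + max 0 (- B w w)" for w
  have cS: "compact S" unfolding S_def
    by (simp add: H0 closed_subspace compact_Int_closed)
  have cphi: "continuous_on S \<phi>" unfolding \<phi>_def
    by (intro continuous_intros bilinear_continuous_on_compose[OF _ _ bl])
  have phipos: "\<phi> w > 0" if "w \<in> S" for w
  proof (cases "B w w \<ge> 0")
    case True
    moreover have "w \<noteq> 0" "w \<in> H0" using that unfolding S_def by auto
    ultimately have "B w u \<noteq> 0" using nz by blast
    then show ?thesis unfolding \<phi>_def by simp
  qed (auto simp: \<phi>_def)
  obtain c where c: "c > 0" "\<forall>w\<in>S. \<phi> w \<ge> c"
  proof (cases "S = {}")
    case True then show ?thesis using that[of 1] by auto
  next
    case False
    then obtain w0 where "w0 \<in> S" "\<forall>w\<in>S. \<phi> w0 \<le> \<phi> w"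
      using continuous_attains_inf[OF cS False cphi] by blast
    then show ?thesis using that[of "\<phi> w0"] phipos by auto
  qed
  obtain K where K: "K > 0" "\<forall>x y. norm (B x y) \<le> K * norm x * norm y"
    using bilinear_bounded_pos[OF bl] by blast
  define R where "R = 1 + 2 * M / c"
  define r where "r = c / (4 * K)"
  have R1: "R \<ge> 1" using assms(5) c by (simp add: R_def)
  have RM: "M / R^2 \<le> c / 2"
  proof -
    have "R \<le> R^2" using R1 by (simp add: power2_eq_square)
    then have "M / R^2 \<le> M / R" using assms(5) R1 by (intro divide_left_mono) auto
    also have "\<dots> \<le> c / 2" using R1 c assms(5)
      by (simp add: R_def field_simps)
    finally show ?thesis .
  qed
  have r0: "r > 0" using c K by (simp add: r_def)
  have main: "B x y \<noteq> 0" if x: "x \<in> A" "norm x \<ge> R" and y: "y \<in> ball u r" for x y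
  proof -
    define n where "n = norm x"
    have n0: "n \<ge> 1" using x R1 by (simp add: n_def)
    define w where "w = (1/n) *\<^sub>R x"
    have xw: "x = n *\<^sub>R w" using n0 by (simp add: w_def)
    have "x \<in> H0" using Msub x(1) by blast
    then have "w \<in> H0" unfolding w_def using H0 by (rule subspace_scale[rotated])
    moreover have "norm w = 1" using n0 unfolding w_def n_def by (auto simp: norm_eq_zero)
    ultimately have wS: "w \<in> S" unfolding S_def by simp
    have "B x x = n^2 * B w w" unfolding xw using bl
      by (simp add: bilinear_lmul bilinear_rmul power2_eq_square)
    moreover have "B x x \<ge> - M" using assms(6) x(1) qB by simp
    ultimately have "n^2 * B w w \<ge> - M" by simp
    then have "B w w \<ge> - M / n^2" using n0 by (simp add: field_simps)
    moreover have "M / n^2 \<le> M / R^2" using n0 x(2) R1 assms(5)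
      proof -
      have "R^2 \<le> n^2" using x(2) R1 by (intro power_mono) (auto simp: n_def)
      moreover have "0 < R^2" using R1 by simp
      moreover have "0 < n^2 * R^2" using n0 R1 by simp
      ultimately show ?thesis using assms(5) by (intro divide_left_mono) auto
    qed
    ultimately have "B w w \<ge> - c / 2" using RM by linarith
    then have "max 0 (- B w w) \<le> c / 2" using c(1) by simp
    moreover have "\<phi> w \<ge> c" using c(2) wS by blast
    ultimately have "\<bar>B w u\<bar> \<ge> c / 2" unfolding \<phi>_def by linarith
    moreover have "\<bar>B w y - B w u\<bar> < c / 4"
    proof -
      have "\<bar>B w y - B w u\<bar> = \<bar>B w (y - u)\<bar>" using bl by (simp add: bilinear_rsub)
      also have "\<dots> \<le> K * norm w * norm (y - u)" using K(2) by (metis real_norm_def)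
      also have "\<dots> = K * norm (y - u)" using wS by (simp add: S_def)
      also have "\<dots> < K * r" using y K(1) by (simp add: dist_norm norm_minus_commute)
      also have "\<dots> = c / 4" using K(1) by (simp add: r_def)
      finally show ?thesis .
    qed
    ultimately have "B w y \<noteq> 0" using c(1) by linarith
    then show ?thesis unfolding xw using bl n0 by (simp add: bilinear_lmul)
  qed
  have "{x \<in> A. ball u r \<inter> q_orth q x \<noteq> {}} \<subseteq> A \<inter> cball 0 R"
  proof
    fix x assume "x \<in> {x \<in> A. ball u r \<inter> q_orth q x \<noteq> {}}"
    then obtain y where xy: "x \<in> A" "y \<in> ball u r" "B x y = 0" by (auto simp: q_orth_def pol)
    then have "\<not> norm x \<ge> R" using main by blast
    then show "x \<in> A \<inter> cball 0 R" using xy by simp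
  qed
  moreover have "finite (A \<inter> cball 0 R)"
  proof (rule ccontr)
    assume "infinite (A \<inter> cball 0 R)"
    then obtain z where "z islimpt (A \<inter> cball 0 R)"
      using bounded_infinite_imp_islimpt[of "A \<inter> cball 0 R" "A \<inter> cball 0 R"] by auto
    then have "z islimpt A" using islimpt_subset by blast
    then show False using assms(4) unfolding discrete_subset_def by blast
  qed
  ultimately have "finite {x \<in> A. ball u r \<inter> q_orth q x \<noteq> {}}" using finite_subset by blast
  then show ?thesis using r0 by (intro exI[of _ "ball u r"]) auto
qed
end
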